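(* Let $(E,\le,\mathrm{Con})$ be a prime event structure and $\mathcal A$ its family of configurations. If $(R,\le_R),\rho$ is an extremal realisation of $\mathcal A$, then $\rho:R\to E$ is injective, its image $\rho R$ is a configuration of $E$, and for all $r,r'\in R$, $r\le_R r'$ iff $\rho(r)\le\rho(r')$.
   Context: A (prime) event structure $(E,\le,\mathrm{Con})$: set $E$, partial order $\le$ with $\{e'\mid e'\le e\}$ finite for all $e$, a nonempty family $\mathrm{Con}$ of finite subsets closed under subsets, containing all singletons, and such that $X\in\mathrm{Con}$ and $e\le e'\in X$ imply $X\cup\{e\}\in\mathrm{Con}$. A configuration is a (possibly infinite) down-closed subset all of whose finite subsets are in $\mathrm{Con}$. A (causal) realisation of a family $\mathcal A$ with $A=\bigcup\mathcal A$ is a partial order $(R,\le_R)$ with finite down-sets and a function $\rho:R\to A$ such that $\rho x\in\mathcal A$ for every down-closed $x\subseteq R$. A map of realisations is a partial surjective function between carriers which sends down-closed subsets to down-closed subsets and commutes with the functions to $A$ where defined; it is total if the function is total. A realisation is extremal if every total map of realisations out of it is an isomorphism of realisations. *)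

theory Defs
  imports Main
begin

definition prime_event_structure ::
  "'e set \<Rightarrow> ('e \<Rightarrow> 'e \<Rightarrow> bool) \<Rightarrow> 'e set set \<Rightarrow> bool" where
  "prime_event_structure E le Con \<longleftrightarrow>
     (\<forall>e\<in>E. le e e) \<and>
     (\<forall>e\<in>E. \<forall>e'\<in>E. le e e' \<and> le e' e \<longrightarrow> e = e') \<and>
     (\<forall>e\<in>E. \<forall>e'\<in>E. \<forall>e''\<in>E. le e e' \<and> le e' e'' \<longrightarrow> le e e'') \<and>
     (\<forall>e\<in>E. finite {e'\<in>E. le e' e}) \<and>
     Con \<noteq> {} \<and>
     (\<forall>X\<in>Con. finite X \<and> X \<subseteq> E) \<and>
     (\<forall>X\<in>Con. \<forall>Y. Y \<subseteq> X \<longrightarrow> Y \<in> Con) \<and>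
     (\<forall>e\<in>E. {e} \<in> Con) \<and>
     (\<forall>X\<in>Con. \<forall>e\<in>E. \<forall>e'\<in>X. le e e' \<longrightarrow> insert e X \<in> Con)"

definition configurations ::
  "'e set \<Rightarrow> ('e \<Rightarrow> 'e \<Rightarrow> bool) \<Rightarrow> 'e set set \<Rightarrow> 'e set set" where
  "configurations E le Con =
     {x. x \<subseteq> E \<and> (\<forall>e\<in>x. \<forall>e'\<in>E. le e' e \<longrightarrow> e' \<in> x)
         \<and> (\<forall>X. finite X \<and> X \<subseteq> x \<longrightarrow> X \<in> Con)}"

definition partial_order_fin_down :: "'r set \<Rightarrow> ('r \<Rightarrow> 'r \<Rightarrow> bool) \<Rightarrow> bool" where
  "partial_order_fin_down R le \<longleftrightarrow>
     (\<forall>r\<in>R. le r r) \<and>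
     (\<forall>r\<in>R. \<forall>r'\<in>R. le r r' \<and> le r' r \<longrightarrow> r = r') \<and>
     (\<forall>r\<in>R. \<forall>r'\<in>R. \<forall>r''\<in>R. le r r' \<and> le r' r'' \<longrightarrow> le r r'') \<and>
     (\<forall>r\<in>R. finite {r'\<in>R. le r' r})"

definition down_closed :: "'r set \<Rightarrow> ('r \<Rightarrow> 'r \<Rightarrow> bool) \<Rightarrow> 'r set \<Rightarrow> bool" where
  "down_closed R le x \<longleftrightarrow> x \<subseteq> R \<and> (\<forall>r\<in>x. \<forall>r'\<in>R. le r' r \<longrightarrow> r' \<in> x)"

definition realisation ::
  "'a set set \<Rightarrow> 'r set \<Rightarrow> ('r \<Rightarrow> 'r \<Rightarrow> bool) \<Rightarrow> ('r \<Rightarrow> 'a) \<Rightarrow> bool" where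
  "realisation A R le rho \<longleftrightarrow>
     partial_order_fin_down R le \<and>
     rho ` R \<subseteq> \<Union>A \<and>
     (\<forall>x. down_closed R le x \<longrightarrow> rho ` x \<in> A)"

definition pimage :: "('r \<rightharpoonup> 's) \<Rightarrow> 'r set \<Rightarrow> 's set" where
  "pimage f x = {s. \<exists>r\<in>x. f r = Some s}"

definition real_map ::
  "'r set \<Rightarrow> ('r \<Rightarrow> 'r \<Rightarrow> bool) \<Rightarrow> ('r \<Rightarrow> 'a) \<Rightarrow>
   's set \<Rightarrow> ('s \<Rightarrow> 's \<Rightarrow> bool) \<Rightarrow> ('s \<Rightarrow> 'a) \<Rightarrow> ('r \<rightharpoonup> 's) \<Rightarrow> bool" where
  "real_map R leR rho S leS sigma f \<longleftrightarrow>
     dom f \<subseteq> R \<and> ran f = S \<and>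
     (\<forall>x. down_closed R leR x \<longrightarrow> down_closed S leS (pimage f x)) \<and>
     (\<forall>r s. f r = Some s \<longrightarrow> sigma s = rho r)"

definition total_real_map ::
  "'r set \<Rightarrow> ('r \<Rightarrow> 'r \<Rightarrow> bool) \<Rightarrow> ('r \<Rightarrow> 'a) \<Rightarrow>
   's set \<Rightarrow> ('s \<Rightarrow> 's \<Rightarrow> bool) \<Rightarrow> ('s \<Rightarrow> 'a) \<Rightarrow> ('r \<rightharpoonup> 's) \<Rightarrow> bool" where
  "total_real_map R leR rho S leS sigma f \<longleftrightarrow>
     real_map R leR rho S leS sigma f \<and> dom f = R"

definition real_iso ::
  "'r set \<Rightarrow> ('r \<Rightarrow> 'r \<Rightarrow> bool) \<Rightarrow> ('r \<Rightarrow> 'a) \<Rightarrow>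
   's set \<Rightarrow> ('s \<Rightarrow> 's \<Rightarrow> bool) \<Rightarrow> ('s \<Rightarrow> 'a) \<Rightarrow> ('r \<rightharpoonup> 's) \<Rightarrow> bool" where
  "real_iso R leR rho S leS sigma f \<longleftrightarrow>
     real_map R leR rho S leS sigma f \<and>
     (\<exists>g. real_map S leS sigma R leR rho g \<and>
          (\<forall>r\<in>R. (g \<circ>\<^sub>m f) r = Some r) \<and>
          (\<forall>s\<in>S. (f \<circ>\<^sub>m g) s = Some s))"

text \<open>Target realisations are taken with carrier in the same type as
  the source; since total maps are surjective, every target is isomorphic to one of
  this form.\<close>
definition extremal ::
  "'a set set \<Rightarrow> 'r set \<Rightarrow> ('r \<Rightarrow> 'r \<Rightarrow> bool) \<Rightarrow> ('r \<Rightarrow> 'a) \<Rightarrow> bool" where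
  "extremal A R le rho \<longleftrightarrow>
     realisation A R le rho \<and>
     (\<forall>(S::'r set) leS sigma f.
        realisation A S leS sigma \<and> total_real_map R le rho S leS sigma f \<longrightarrow>
        real_iso R le rho S leS sigma f)"

end

theory Submission
  imports Defs
begin

theorem mainTheorem5:
  fixes E :: "'e set" and le :: "'e \<Rightarrow> 'e \<Rightarrow> bool" and Con :: "'e set set"
    and R :: "'r set" and leR :: "'r \<Rightarrow> 'r \<Rightarrow> bool" and rho :: "'r \<Rightarrow> 'e"
  assumes "prime_event_structure E le Con"
    and "extremal (configurations E le Con) R leR rho"
  shows "inj_on rho R \<and> rho ` R \<in> configurations E le Con \<and>
         (\<forall>r\<in>R. \<forall>r'\<in>R. leR r r' \<longleftrightarrow> le (rho r) (rho r'))"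
proof -
  define A where "A = configurations E le Con"
  have pes: "prime_event_structure E le Con" by fact
  note P = pes[unfolded prime_event_structure_def]
  have le_refl: "\<And>e. e \<in> E \<Longrightarrow> le e e" using P[THEN conjunct1] by blast
  have le_anti: "\<And>e e'. e \<in> E \<Longrightarrow> e' \<in> E \<Longrightarrow> le e e' \<Longrightarrow> le e' e \<Longrightarrow> e = e'"
    using P[THEN conjunct2, THEN conjunct1] by blast
  have le_trans: "\<And>e e' e''. e \<in> E \<Longrightarrow> e' \<in> E \<Longrightarrow> e'' \<in> E \<Longrightarrow> le e e' \<Longrightarrow> le e' e'' \<Longrightarrow> le e e''"
    using P[THEN conjunct2, THEN conjunct2, THEN conjunct1] by blast
  have le_fin: "\<And>e. e \<in> E \<Longrightarrow> finite {e'\<in>E. le e' e}"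
    using P[THEN conjunct2, THEN conjunct2, THEN conjunct2, THEN conjunct1] by blast
  have ext: "extremal A R leR rho" using assms(2) A_def by simp
  have real: "realisation A R leR rho" using ext extremal_def by blast
  have po: "partial_order_fin_down R leR" using real realisation_def by blast
  note Q = po[unfolded partial_order_fin_down_def]
  have leR_refl: "\<And>r. r \<in> R \<Longrightarrow> leR r r" using Q[THEN conjunct1] by blast
  have leR_trans: "\<And>r r' r''. r \<in> R \<Longrightarrow> r' \<in> R \<Longrightarrow> r'' \<in> R \<Longrightarrow> leR r r' \<Longrightarrow> leR r' r'' \<Longrightarrow> leR r r''"
    using Q[THEN conjunct2, THEN conjunct2, THEN conjunct1] by blast
  have dcA: "\<And>x. down_closed R leR x \<Longrightarrow> rho ` x \<in> A" using real unfolding realisation_def by blast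
  have RC: "rho ` R \<in> A" using dcA unfolding down_closed_def by blast
  define C where "C = rho ` R"
  have CE: "C \<subseteq> E" and Cdown: "\<And>e e'. e \<in> C \<Longrightarrow> e' \<in> E \<Longrightarrow> le e' e \<Longrightarrow> e' \<in> C"
    and Ccon: "\<And>X. finite X \<Longrightarrow> X \<subseteq> C \<Longrightarrow> X \<in> Con"
    using RC unfolding C_def A_def configurations_def by auto
  have confA: "\<And>x. x \<in> A \<Longrightarrow> x \<subseteq> E \<and> (\<forall>e\<in>x. \<forall>e'\<in>E. le e' e \<longrightarrow> e' \<in> x)"
    unfolding A_def configurations_def by blast
  define s where "s = (\<lambda>e. SOME r. r \<in> R \<and> rho r = e)"
  have hs: "\<And>r. r \<in> R \<Longrightarrow> s (rho r) \<in> R \<and> rho (s (rho r)) = rho r"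
    unfolding s_def by (rule someI_ex) blast
  define S where "S = s ` C"
  define leS where "leS = (\<lambda>a b. le (rho a) (rho b))"
  define f where "f = (\<lambda>r. if r \<in> R then Some (s (rho r)) else None)"
  have SR: "S \<subseteq> R" using hs unfolding S_def C_def by auto
  have Sfix: "\<And>b. b \<in> S \<Longrightarrow> s (rho b) = b" using hs unfolding S_def C_def by auto
  have injS: "inj_on rho S" by (metis Sfix inj_onI)
  have rhoSE: "\<And>a. a \<in> S \<Longrightarrow> rho a \<in> E" using SR CE unfolding C_def by auto
  have sC: "\<And>e. e \<in> C \<Longrightarrow> s e \<in> S \<and> rho (s e) = e" using hs unfolding S_def C_def by auto
  have poS: "partial_order_fin_down S leS"
    unfolding partial_order_fin_down_def leS_def
  proof (intro conjI ballI impI)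
    fix r assume "r \<in> S" thus "le (rho r) (rho r)" using le_refl rhoSE by blast
  next
    fix r r' assume "r \<in> S" "r' \<in> S" "le (rho r) (rho r') \<and> le (rho r') (rho r)"
    thus "r = r'" using le_anti rhoSE injS by (metis inj_onD)
  next
    fix r r' r'' assume "r \<in> S" "r' \<in> S" "r'' \<in> S" "le (rho r) (rho r') \<and> le (rho r') (rho r'')"
    thus "le (rho r) (rho r'')" using le_trans rhoSE by blast
  next
    fix r assume r: "r \<in> S"
    have sub: "rho ` {r' \<in> S. le (rho r') (rho r)} \<subseteq> {e'\<in>E. le e' (rho r)}" using rhoSE by auto
    have fin: "finite (rho ` {r' \<in> S. le (rho r') (rho r)})"
      by (rule finite_subset[OF sub le_fin[OF rhoSE[OF r]]])
    have ij: "inj_on rho {r' \<in> S. le (rho r') (rho r)}"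
      by (rule inj_on_subset[OF injS]) auto
    show "finite {r' \<in> S. le (rho r') (rho r)}"
      by (rule finite_imageD[OF fin ij])
  qed
  have realS: "realisation A S leS rho"
    unfolding realisation_def
  proof (intro conjI allI impI)
    show "partial_order_fin_down S leS" by fact
    show "rho ` S \<subseteq> \<Union> A" using RC SR unfolding C_def by blast
  next
    fix x assume dx: "down_closed S leS x"
    have xS: "x \<subseteq> S" using dx unfolding down_closed_def by blast
    show "rho ` x \<in> A" unfolding A_def configurations_def
    proof (intro CollectI conjI allI impI ballI)
      show "rho ` x \<subseteq> E" using xS rhoSE by blast
    next
      fix e e' assume e: "e \<in> rho ` x" and e': "e' \<in> E" "le e' e"
      then obtain a where a: "a \<in> x" "e = rho a" by blast
      have "e \<in> C" using a xS SR unfolding C_def by blast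
      hence "e' \<in> C" using Cdown e' by blast
      hence se: "s e' \<in> S" "rho (s e') = e'" using sC by auto
      have dd: "\<forall>r\<in>x. \<forall>r'\<in>S. leS r' r \<longrightarrow> r' \<in> x" using dx unfolding down_closed_def by blast
      have "leS (s e') a" unfolding leS_def using se(2) a(2) e'(2) by simp
      hence "s e' \<in> x" using dd a(1) se(1) by blast
      thus "e' \<in> rho ` x" by (rule image_eqI[where f=rho, OF se(2)[symmetric]])
    next
      fix X assume "finite X \<and> X \<subseteq> rho ` x"
      hence "X \<subseteq> C" "finite X" using xS SR unfolding C_def by blast+
      thus "X \<in> Con" using Ccon by blast
    qed
  qed
  have fmap: "total_real_map R leR rho S leS rho f"
    unfolding total_real_map_def real_map_def
  proof (intro conjI allI impI)
    show "dom f \<subseteq> R" unfolding f_def dom_def by auto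
    show "dom f = R" unfolding f_def dom_def by auto
    show "ran f = S" unfolding f_def ran_def S_def C_def by auto
  next
    fix r s' assume "f r = Some s'" thus "rho s' = rho r" using hs unfolding f_def
      by (auto split: if_splits)
  next
    fix x assume dx: "down_closed R leR x"
    have xR: "x \<subseteq> R" using dx unfolding down_closed_def by blast
    have pf: "pimage f x = s ` rho ` x" using xR unfolding pimage_def f_def by auto
    have cx: "rho ` x \<in> A" using dcA dx by blast
    show "down_closed S leS (pimage f x)" unfolding down_closed_def pf
    proof (intro conjI ballI impI)
      show "s ` rho ` x \<subseteq> S" using xR unfolding S_def C_def by blast
    next
      fix a b assume a: "a \<in> s ` rho ` x" and b: "b \<in> S" and l: "leS b a"
      obtain r where r: "r \<in> x" "a = s (rho r)" using a by blast
      have "rho a = rho r" using hs r xR by blast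
      hence "rho b \<in> rho ` x" using confA[OF cx] l rhoSE[OF b] r unfolding leS_def by auto
      thus "b \<in> s ` rho ` x" using Sfix[OF b] by (metis image_eqI)
    qed
  qed
  have iso: "real_iso R leR rho S leS rho f" using ext realS fmap unfolding extremal_def by blast
  then obtain g where g: "real_map S leS rho R leR rho g" and gf: "\<forall>r\<in>R. (g \<circ>\<^sub>m f) r = Some r"
    unfolding real_iso_def by blast
  have inj: "inj_on rho R"
  proof (rule inj_onI)
    fix r r' assume "r \<in> R" "r' \<in> R" "rho r = rho r'"
    thus "r = r'" using gf unfolding f_def map_comp_def by (metis option.simps(5))
  qed
  have sR: "\<And>r. r \<in> R \<Longrightarrow> s (rho r) = r" using hs inj inj_onD by metis
  have gR: "\<And>r. r \<in> R \<Longrightarrow> g r = Some r" using gf sR unfolding f_def map_comp_def by fastforce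
  have SeqR: "S = R" using sR unfolding S_def C_def by force
  have gdc: "\<And>x. down_closed S leS x \<Longrightarrow> down_closed R leR (pimage g x)"
    using g unfolding real_map_def by blast
  have pg: "\<And>x. x \<subseteq> R \<Longrightarrow> pimage g x = x" using gR unfolding pimage_def by auto
  have order: "\<forall>r\<in>R. \<forall>r'\<in>R. leR r r' \<longleftrightarrow> le (rho r) (rho r')"
  proof (intro ballI iffI)
    fix r r' assume r: "r \<in> R" "r' \<in> R" and l: "leR r r'"
    define x where "x = {b \<in> R. le (rho b) (rho r')}"
    have RE: "\<And>a. a \<in> R \<Longrightarrow> rho a \<in> E" using rhoSE SeqR by blast
    have xR: "x \<subseteq> R" unfolding x_def by blast
    have "down_closed S leS x" unfolding down_closed_def SeqR
    proof (intro conjI ballI impI)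
      show "x \<subseteq> R" by fact
    next
      fix a b assume a: "a \<in> x" and b: "b \<in> R" and ba: "leS b a"
      have aR: "a \<in> R" and l1: "le (rho a) (rho r')" using a unfolding x_def by auto
      have l2: "le (rho b) (rho a)" using ba unfolding leS_def .
      have "le (rho b) (rho r')" by (rule le_trans[OF RE[OF b] RE[OF aR] RE[OF r(2)] l2 l1])
      thus "b \<in> x" using b unfolding x_def by simp
    qed
    hence "down_closed R leR (pimage g x)" by (rule gdc)
    hence "down_closed R leR x" using pg[OF xR] by simp
    moreover have "r' \<in> x" unfolding x_def using r(2) le_refl[OF RE[OF r(2)]] by simp
    ultimately have dd: "\<forall>a\<in>x. \<forall>b\<in>R. leR b a \<longrightarrow> b \<in> x" "r' \<in> x"
      unfolding down_closed_def by blast+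
    have "r \<in> x" using dd(1) dd(2) r(1) l by blast
    thus "le (rho r) (rho r')" unfolding x_def by blast
  next
    fix r r' assume r: "r \<in> R" "r' \<in> R" and l: "le (rho r) (rho r')"
    have RE: "\<And>a. a \<in> R \<Longrightarrow> rho a \<in> E" using rhoSE SeqR by blast
    define x where "x = {b \<in> R. leR b r'}"
    have dx: "down_closed R leR x" unfolding down_closed_def
    proof (intro conjI ballI impI)
      show "x \<subseteq> R" unfolding x_def by blast
    next
      fix a b assume a: "a \<in> x" and b: "b \<in> R" and ba: "leR b a"
      have aR: "a \<in> R" and l1: "leR a r'" using a unfolding x_def by auto
      have "leR b r'" by (rule leR_trans[OF b aR r(2) ba l1])
      thus "b \<in> x" using b unfolding x_def by simp
    qed
    have "r' \<in> x" unfolding x_def using r(2) leR_refl[OF r(2)] by simp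
    hence r'x: "rho r' \<in> rho ` x" by (rule imageI)
    have cl: "\<forall>e\<in>rho ` x. \<forall>e'\<in>E. le e' e \<longrightarrow> e' \<in> rho ` x"
      using confA[OF dcA[OF dx]] by blast
    have "rho r \<in> rho ` x" using cl r'x RE[OF r(1)] l by blast
    then obtain b where bx: "b \<in> x" and rb: "rho r = rho b" by blast
    have bR: "b \<in> R" using bx unfolding x_def by blast
    have "r = b" by (rule inj_onD[OF inj rb r(1) bR])
    thus "leR r r'" using bx unfolding x_def by blast
  qed
  have "rho ` R \<in> configurations E le Con" using RC unfolding A_def .
  thus ?thesis using inj order by blast
qed

end
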